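(* Assume $\beta^2\le\frac43-\mu$ for a constant $\mu>0$. There is $a_0>0$ depending only on $S$ and $\mu$ such that for all $0<a\le\min(a_0,\lambda/2)$ and every $t\ge0$: if $x^s_{3N/4}(t)\le0$, then $$\mathbb E\left[\Phi(x^s(t+1))\,\middle|\,x^s(t)\right]\le\left(1-\frac{\mu a}{2N}\right)\Phi(x^s(t))+1.$$
   Context: Weighted balls into weighted bins: $n$ bins with positive integer weights $N_1,\dots,N_n$, $N=\sum_iN_i$; $\mathcal D$ on $[n]$ is $(\alpha,\beta)$-biased, i.e. $\frac{N_i}{\alpha N}\le\Pr_{\mathcal D}[i]\le\frac{\beta N_i}{N}$, $\alpha,\beta\ge1$. Ball weights $w(t)$ are i.i.d. from $\mathcal W$ on $[0,\infty)$ with $\mathbb E[\mathcal W]=1$ and $M(z)=\mathbb E[e^{z\mathcal W}]$ finite at $z=\lambda$ for some $\lambda>0$; $S\ge1$ is a constant with $M''(z)\le2S$ for all $|z|<\lambda/2$. Each round two bins are sampled independently from $\mathcal D$ and the ball goes to the sampled bin with smaller value $v_i(t-1)=w_i(t-1)/N_i$. Slot formulation: bin $i$ consists of $N_i$ unit slots; the normalized slot vector $x^s(t)\in\mathbb R^N$ has, for each slot of bin $i$, the entry $v_i(t)-\frac1N\sum_{t'\le t}w(t')$, indexed so that $x^s_1(t)\ge\dots\ge x^s_N(t)$; fractional indices such as $3N/4$ are rounded up. $\Phi(y)=\sum_je^{ay_j}$. *)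

theory Defs
  imports "HOL-Probability.Probability"
begin

text \<open>Bins are indexed by 0..n-1; bin i has positive integer weight (number of slots) Nw i.
  L i is the load w_i(t) of bin i; the total ball weight so far is the sum of all loads.\<close>

definition total_slots :: "nat \<Rightarrow> (nat \<Rightarrow> nat) \<Rightarrow> nat" where
  "total_slots n Nw = (\<Sum>i<n. Nw i)"

definition norm_value :: "nat \<Rightarrow> (nat \<Rightarrow> nat) \<Rightarrow> (nat \<Rightarrow> real) \<Rightarrow> nat \<Rightarrow> real" where
  "norm_value n Nw L i = L i / real (Nw i) - (\<Sum>k<n. L k) / real (total_slots n Nw)"

text \<open>Normalized slot vector, sorted non-increasingly (as a list of length N; entry number k,
  1-based, is the list element at position k-1).\<close>
definition slot_vector :: "nat \<Rightarrow> (nat \<Rightarrow> nat) \<Rightarrow> (nat \<Rightarrow> real) \<Rightarrow> real list" where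
  "slot_vector n Nw L =
     rev (sort (concat (map (\<lambda>i. replicate (Nw i) (norm_value n Nw L i)) [0..<n])))"

definition Phi :: "real \<Rightarrow> real list \<Rightarrow> real" where
  "Phi a y = sum_list (map (\<lambda>yj. exp (a * yj)) y)"

definition chosen_bin ::
  "(nat \<Rightarrow> nat) \<Rightarrow> (nat \<Rightarrow> nat \<Rightarrow> nat) \<Rightarrow> (nat \<Rightarrow> real) \<Rightarrow> nat \<Rightarrow> nat \<Rightarrow> nat" where
  "chosen_bin Nw tb L i j =
     (if L i / real (Nw i) < L j / real (Nw j) then i
      else if L j / real (Nw j) < L i / real (Nw i) then j
      else tb i j)"

definition next_load ::
  "(nat \<Rightarrow> nat) \<Rightarrow> (nat \<Rightarrow> nat \<Rightarrow> nat) \<Rightarrow> (nat \<Rightarrow> real) \<Rightarrow> nat \<Rightarrow> nat \<Rightarrow> real \<Rightarrow> (nat \<Rightarrow> real)" where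
  "next_load Nw tb L i j w = (let k = chosen_bin Nw tb L i j in L(k := L k + w))"

definition mgf :: "real measure \<Rightarrow> real \<Rightarrow> real" where
  "mgf W z = (\<integral>w. exp (z * w) \<partial>W)"

end

theory Submission
  imports Defs
begin

lemma pow_le_fact_exp:
  fixes x :: real assumes "0 \<le> x" shows "x ^ k \<le> fact k * exp x"
proof -
  have "x ^ k / fact k \<le> (\<Sum>n. x ^ n /\<^sub>R fact n)"
  proof -
    have s: "summable (\<lambda>n. x ^ n /\<^sub>R fact n)" by (rule summable_exp_generic)
    have "(\<Sum>n\<in>{k}. x ^ n /\<^sub>R fact n) \<le> (\<Sum>n. x ^ n /\<^sub>R fact n)"
      by (rule sum_le_suminf[OF s]) (use assms in auto)
    then show ?thesis by (simp add: divide_inverse mult.commute)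
  qed
  then have "x ^ k / fact k \<le> exp x" by (simp add: exp_def)
  then show ?thesis by (simp add: divide_le_eq mult.commute)
qed

lemma exp_rem:
  fixes y :: real shows "\<bar>exp y - 1 - y\<bar> \<le> exp \<bar>y\<bar> * y\<^sup>2"
proof -
  have "exp y - 1 - y \<ge> 0" using exp_ge_add_one_self[of y] by linarith
  then show ?thesis using Taylor_exp_field[of y 1] by (simp add: power2_eq_square)
qed

lemma deriv_from_bound:
  fixes f :: "real \<Rightarrow> real"
  assumes r: "r > 0" and b: "\<And>h. \<bar>h\<bar> < r \<Longrightarrow> \<bar>f (z + h) - f z - h * D\<bar> \<le> K * h\<^sup>2"
  shows "(f has_real_derivative D) (at z)"
proof -
  have ev: "eventually (\<lambda>y. norm ((f y - f z) / (y - z) - D) \<le> K * \<bar>y - z\<bar>) (at z)"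
    unfolding eventually_at
  proof (intro exI[of _ r] conjI ballI impI allI)
    fix y assume y: "y \<noteq> z \<and> dist y z < r"
    have "\<bar>f (z + (y - z)) - f z - (y - z) * D\<bar> \<le> K * (y - z)\<^sup>2"
      using y by (intro b) (simp add: dist_real_def)
    moreover have "(f y - f z) / (y - z) - D = (f y - f z - (y - z) * D) / (y - z)"
      using y by (simp add: field_simps)
    ultimately show "norm ((f y - f z) / (y - z) - D) \<le> K * \<bar>y - z\<bar>"
      using y by (simp add: abs_divide divide_le_eq power2_eq_square abs_mult mult.assoc)
  qed (use r in auto)
  have lim: "((\<lambda>y. K * \<bar>y - z\<bar>) \<longlongrightarrow> 0) (at z)"
    by (rule tendsto_eq_intros refl | simp)+
  have "((\<lambda>y. (f y - f z) / (y - z) - D) \<longlongrightarrow> 0) (at z)"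
    by (rule Lim_null_comparison[OF ev lim])
  then have "((\<lambda>y. (f y - f z) / (y - z)) \<longlongrightarrow> D) (at z)"
    by (simp add: LIM_zero_iff)
  then show ?thesis by (simp add: has_field_derivative_iff)
qed

context
  fixes W :: "real measure" and lam :: real
  assumes Wp: "prob_space W" and Ws: "sets W = sets borel" and Wnn: "AE w in W. 0 \<le> w"
    and lam: "lam > 0" and Wi: "integrable W (\<lambda>w. exp (lam * w))"
begin

lemma measW: "f \<in> borel_measurable borel \<Longrightarrow> f \<in> borel_measurable W"
  using measurable_cong_sets[OF Ws refl, of borel] by metis

lemma integW:
  assumes "\<bar>z\<bar> < lam"
  shows "integrable W (\<lambda>w. w ^ k * exp (z * w))"
proof -
  define d where "d = lam - \<bar>z\<bar>"
  have d: "d > 0" using assms by (simp add: d_def)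
  have i: "integrable W (\<lambda>w. fact k / d ^ k * exp (lam * w))"
    using Wi by (rule integrable_mult_right)
  show ?thesis
  proof (rule Bochner_Integration.integrable_bound[OF i])
    show "(\<lambda>w. w ^ k * exp (z * w)) \<in> borel_measurable W"
      by (rule measW) measurable
    show "AE w in W. norm (w ^ k * exp (z * w)) \<le> norm (fact k / d ^ k * exp (lam * w))"
      using Wnn
    proof eventually_elim
      case (elim w)
      have "(d * w) ^ k \<le> fact k * exp (d * w)"
        using elim d by (intro pow_le_fact_exp) simp
      then have 1: "w ^ k \<le> fact k / d ^ k * exp (d * w)"
        using d by (simp add: power_mult_distrib field_simps)
      have 2: "exp (z * w) \<le> exp (\<bar>z\<bar> * w)"
        using elim by (simp add: mult_right_mono)
      have "w ^ k * exp (z * w) \<le> fact k / d ^ k * exp (d * w) * exp (\<bar>z\<bar> * w)"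
        using 1 2 elim d by (intro mult_mono) simp_all
      also have "\<dots> = fact k / d ^ k * exp (lam * w)"
        by (simp add: d_def mult.assoc flip: exp_add) (simp add: algebra_simps)
      finally show ?case using elim d by simp
    qed
  qed
qed

definition Mk :: "nat \<Rightarrow> real \<Rightarrow> real" where
  "Mk k z = (\<integral>w. w ^ k * exp (z * w) \<partial>W)"

lemma Mk_deriv:
  assumes z: "\<bar>z\<bar> < lam"
  shows "(Mk k has_real_derivative Mk (Suc k) z) (at z)"
proof -
  define d where "d = (lam - \<bar>z\<bar>) / 2"
  have d: "d > 0" using z by (simp add: d_def)
  define C where "C = fact (k + 2) / d ^ (k + 2)"
  have C: "C \<ge> 0" using d by (simp add: C_def)
  define E where "E = (\<integral>w. exp (lam * w) \<partial>W)"
  show ?thesis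
  proof (rule deriv_from_bound[OF d, where K = "C * E"])
    fix h :: real assume h: "\<bar>h\<bar> < d"
    have hz: "\<bar>z + h\<bar> < lam" using h z by (simp add: d_def)
    have i0: "integrable W (\<lambda>w. w ^ k * exp (z * w))" by (rule integW[OF z])
    have i1: "integrable W (\<lambda>w. w ^ Suc k * exp (z * w))" by (rule integW[OF z])
    have i2: "integrable W (\<lambda>w. w ^ k * exp ((z + h) * w))" by (rule integW[OF hz])
    define f where "f w = w ^ k * exp ((z + h) * w) - w ^ k * exp (z * w) - h * (w ^ Suc k * exp (z * w))" for w
    have fi: "integrable W f" unfolding f_def using i0 i1 i2 by auto
    have eq: "Mk k (z + h) - Mk k z - h * Mk (Suc k) z = (\<integral>w. f w \<partial>W)"
      unfolding f_def Mk_def using i0 i1 i2 by simp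
    have bi: "integrable W (\<lambda>w. h\<^sup>2 * C * exp (lam * w))" using Wi by simp
    have bnd: "AE w in W. norm (f w) \<le> h\<^sup>2 * C * exp (lam * w)"
      using Wnn
    proof eventually_elim
      case (elim w)
      have fw: "f w = w ^ k * exp (z * w) * (exp (h * w) - 1 - h * w)"
        by (simp add: f_def algebra_simps exp_add distrib_right)
      have r: "\<bar>exp (h * w) - 1 - h * w\<bar> \<le> exp (\<bar>h\<bar> * w) * (h\<^sup>2 * w\<^sup>2)"
        using exp_rem[of "h * w"] elim by (simp add: abs_mult power_mult_distrib)
      have "norm (f w) = w ^ k * exp (z * w) * \<bar>exp (h * w) - 1 - h * w\<bar>"
        using elim by (simp add: fw abs_mult)
      also have "\<dots> \<le> w ^ k * exp (z * w) * (exp (\<bar>h\<bar> * w) * (h\<^sup>2 * w\<^sup>2))"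
        using r elim by (intro mult_left_mono) simp_all
      also have "\<dots> = h\<^sup>2 * (w ^ (k + 2) * exp ((z + \<bar>h\<bar>) * w))"
        by (simp add: algebra_simps exp_add power2_eq_square power_add)
      also have "\<dots> \<le> h\<^sup>2 * (C * exp (d * w) * exp ((\<bar>z\<bar> + d) * w))"
      proof (intro mult_left_mono mult_mono)
        have "(d * w) ^ (k + 2) \<le> fact (k + 2) * exp (d * w)"
          using elim d by (intro pow_le_fact_exp) simp
        then show "w ^ (k + 2) \<le> C * exp (d * w)"
          using d by (simp add: C_def power_mult_distrib field_simps)
        show "exp ((z + \<bar>h\<bar>) * w) \<le> exp ((\<bar>z\<bar> + d) * w)"
          using elim h by (simp add: mult_right_mono)
      qed (use elim C in simp_all)
      also have "\<dots> = h\<^sup>2 * C * exp (lam * w)"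
        by (simp add: d_def mult.assoc flip: exp_add) (simp add: algebra_simps)
      finally show ?case .
    qed
    have "\<bar>\<integral>w. f w \<partial>W\<bar> \<le> (\<integral>w. norm (f w) \<partial>W)"
      using integral_norm_bound[of W f] by simp
    also have "\<dots> \<le> (\<integral>w. h\<^sup>2 * C * exp (lam * w) \<partial>W)"
      by (rule integral_mono_AE[OF integrable_norm[OF fi] bi bnd])
    also have "\<dots> = C * E * h\<^sup>2" by (simp add: E_def)
    finally show "\<bar>Mk k (z + h) - Mk k z - h * Mk (Suc k) z\<bar> \<le> C * E * h\<^sup>2"
      by (simp add: eq)
  qed
qed

lemma Mk0_0: "Mk 0 0 = 1"
  using prob_space.prob_space[OF Wp] by (simp add: Mk_def)

lemma mgf_le:
  assumes mean: "(\<integral>w. w \<partial>W) = 1"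
    and S: "\<forall>z. \<bar>z\<bar> < lam / 2 \<longrightarrow> deriv (deriv (mgf W)) z \<le> 2 * S"
    and z: "- (lam / 2) \<le> z" "z < lam / 2"
  shows "mgf W z \<le> 1 + z + S * z\<^sup>2"
proof -
  have mM: "mgf W = Mk 0" by (simp add: fun_eq_iff mgf_def Mk_def)
  have M10: "Mk 1 0 = 1" using mean by (simp add: Mk_def)
  have D1: "deriv (Mk 0) x = Mk 1 x" if "\<bar>x\<bar> < lam" for x
    using Mk_deriv[OF that, of 0] by (simp add: DERIV_imp_deriv)
  have D2: "(deriv (Mk 0) has_real_derivative Mk 2 x) (at x)" if "\<bar>x\<bar> < lam" for x
  proof -
    have d: "(Mk 1 has_real_derivative Mk 2 x) (at x)"
      using Mk_deriv[OF that, of 1] by (simp add: numeral_2_eq_2)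
    show ?thesis
  proof (rule has_field_derivative_transform_within_open[OF d])
    show "open {-lam<..<lam}" by simp
    show "x \<in> {-lam<..<lam}" using that by auto
    show "Mk 1 y = deriv (Mk 0) y" if "y \<in> {-lam<..<lam}" for y
      using D1[of y] that by auto
  qed
  qed
  have M2: "Mk 2 x \<le> 2 * S" if "\<bar>x\<bar> < lam / 2" for x
  proof -
    have "deriv (deriv (Mk 0)) x = Mk 2 x"
      using D2[of x] that lam by (simp add: DERIV_imp_deriv)
    then show ?thesis using S that mM by auto
  qed
  define g where "g x = Mk 0 x - 1 - x - S * x\<^sup>2" for x
  define g1 where "g1 x = Mk 1 x - 1 - 2 * S * x" for x
  have dg: "(g has_real_derivative g1 x) (at x)" if "\<bar>x\<bar> < lam" for x
    unfolding g_def g1_def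
    by (rule derivative_eq_intros Mk_deriv[OF that, of 0] refl | simp)+
  have dg1: "(g1 has_real_derivative (Mk 2 x - 2 * S)) (at x)" if "\<bar>x\<bar> < lam" for x
    unfolding g1_def
    by (rule derivative_eq_intros Mk_deriv[OF that, of 1] refl | simp add: numeral_2_eq_2)+
  have g0: "g 0 = 0" by (simp add: g_def Mk0_0)
  have g10: "g1 0 = 0" using M10 by (simp add: g1_def)
  have g1dec: "g1 v \<le> g1 u" if "- (lam / 2) < u" "u \<le> v" "v < lam / 2" for u v
  proof (rule DERIV_nonpos_imp_nonincreasing[OF that(2)])
    fix x assume "u \<le> x" "x \<le> v"
    then have x: "\<bar>x\<bar> < lam / 2" using that by auto
    show "\<exists>y. (g1 has_real_derivative y) (at x) \<and> y \<le> 0"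
    proof (intro exI conjI)
      show "(g1 has_real_derivative Mk 2 x - 2 * S) (at x)" using dg1[of x] x lam by auto
    qed (use M2[OF x] in simp)
  qed
  have gcont: "continuous_on {u..v} g" if "- (lam / 2) \<le> u" "v \<le> lam / 2" for u v
  proof (rule continuous_at_imp_continuous_on, intro ballI)
    fix x assume "x \<in> {u..v}"
    then have "\<bar>x\<bar> < lam" using that lam by auto
    then show "isCont g x" using dg by (blast intro: DERIV_isCont)
  qed
  show ?thesis
  proof (cases "z \<ge> 0")
    case True
    have "g z \<le> g 0"
    proof (rule DERIV_nonpos_imp_nonincreasing[of 0 z g, OF True])
      fix x assume x: "0 \<le> x" "x \<le> z"
      then have "\<bar>x\<bar> < lam" using z lam by auto
      moreover have "g1 x \<le> g1 0" using g1dec[of 0 x] x z lam by auto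
      ultimately show "\<exists>y. (g has_real_derivative y) (at x) \<and> y \<le> 0"
        using dg g10 by auto
    qed
    then show ?thesis using g0 mM by (simp add: g_def)
  next
    case False
    have "g z \<le> g 0"
    proof (rule DERIV_nonneg_imp_increasing_open[of z 0 g])
      show "z \<le> 0" using False by simp
      fix x assume x: "z < x" "x < 0"
      then have "\<bar>x\<bar> < lam" using z lam by auto
      moreover have "g1 0 \<le> g1 x" using g1dec[of x 0] x z lam by auto
      ultimately show "\<exists>y. (g has_real_derivative y) (at x) \<and> y \<ge> 0"
        using dg g10 by auto
    next
      show "continuous_on {z..0} g" using gcont[of z 0] z lam by auto
    qed
    then show ?thesis using g0 mM by (simp add: g_def)
  qed
qed

end


lemma sum_list_map_rev_sort:
  "sum_list (map (f::real\<Rightarrow>real) (rev (sort xs))) = sum_list (map f (xs::real list))"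
proof -
  have "mset (map f (rev (sort xs))) = mset (map f xs)" by simp
  then show ?thesis by (metis sum_mset_sum_list)
qed

lemma sum_list_concat_rep:
  "sum_list (map f (concat (map (\<lambda>i. replicate (Nw i) (y i)) [0..<n]))) =
     (\<Sum>k<n. real (Nw k) * f (y k))"
  by (induction n) (simp_all add: sum_list_replicate)

lemma phi_slot:
  "Phi a (slot_vector n Nw L) = (\<Sum>k<n. real (Nw k) * exp (a * norm_value n Nw L k))"
  unfolding Phi_def slot_vector_def sum_list_map_rev_sort sum_list_concat_rep ..

lemma sorted_desc_count:
  fixes l :: "real list"
  assumes m: "m < length (rev (sort l))" and le: "rev (sort l) ! m \<le> 0"
  shows "length (filter (\<lambda>x. 0 < x) l) \<le> m"
proof -
  define ys where "ys = rev (sort l)"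
  have len: "length (filter (\<lambda>x. 0 < x) ys) = length (filter (\<lambda>x. 0 < x) l)"
  proof -
    have "mset (filter (\<lambda>x. 0 < x) ys) = mset (filter (\<lambda>x. 0 < x) l)"
      by (simp add: ys_def)
    then show ?thesis by (metis size_mset)
  qed
  have mono: "ys ! j \<le> ys ! m" if "m \<le> j" "j < length ys" for j
  proof -
    have s: "sorted (sort l)" by simp
    have "sort l ! (length l - Suc j) \<le> sort l ! (length l - Suc m)"
      using that m by (intro sorted_nth_mono[OF s]) (auto simp: ys_def)
    then show ?thesis using that m by (simp add: ys_def rev_nth)
  qed
  have "filter (\<lambda>x. 0 < x) (drop m ys) = []"
  proof (rule filter_False, intro ballI)
    fix x assume "x \<in> set (drop m ys)"
    then obtain i where i: "i < length (drop m ys)" "x = drop m ys ! i"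
      by (auto simp: in_set_conv_nth)
    then have "x = ys ! (m + i)" "m + i < length ys" using m by (auto simp: ys_def)
    then have "x \<le> ys ! m" using mono[of "m + i"] by simp
    then show "\<not> 0 < x" using le by (simp add: ys_def)
  qed
  then have "filter (\<lambda>x. 0 < x) ys = filter (\<lambda>x. 0 < x) (take m ys)"
    by (metis append_Nil2 append_take_drop_id filter_append)
  then have "length (filter (\<lambda>x. 0 < x) ys) \<le> length (take m ys)"
    by (metis length_filter_le)
  then show ?thesis using len by simp
qed

lemma count_concat_rep:
  "length (filter P (concat (map (\<lambda>i. replicate (Nw i) (y i)) [0..<n]))) =
     (\<Sum>k<n. if P (y k) then Nw k else 0)"
  by (induction n) simp_all

lemma length_concat_rep:
  "length (concat (map (\<lambda>i. replicate (Nw i) (y i)) [0..<n])) = (\<Sum>k<n. Nw k)"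
  by (induction n) simp_all

lemma length_slot_vector: "length (slot_vector n Nw L) = total_slots n Nw"
  unfolding slot_vector_def total_slots_def by (simp add: length_concat_rep)

lemma abel:
  fixes q s g :: "nat \<Rightarrow> real"
  assumes K: "finite K" and c: "c \<ge> 0"
    and g: "\<forall>k\<in>K. 0 \<le> g k"
    and hyp: "\<forall>t>0. (\<Sum>k\<in>{k\<in>K. t \<le> g k}. q k) \<le> c * (\<Sum>k\<in>{k\<in>K. t \<le> g k}. s k)"
  shows "(\<Sum>k\<in>K. q k * g k) \<le> c * (\<Sum>k\<in>K. s k * g k)"
  using g hyp
proof (induction "card {k\<in>K. 0 < g k}" arbitrary: g rule: less_induct)
  case less
  show ?case
  proof (cases "{k\<in>K. 0 < g k} = {}")
    case True
    then have "\<forall>k\<in>K. g k = 0" using less.prems(1) by force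
    then show ?thesis by simp
  next
    case False
    define P where "P = {k\<in>K. 0 < g k}"
    have Pf: "finite P" using K by (simp add: P_def)
    define m where "m = Min (g ` P)"
    have mP: "m \<in> g ` P" unfolding m_def using False Pf by (simp add: P_def)
    then obtain k0 where k0: "k0 \<in> P" "g k0 = m" by auto
    have m0: "m > 0" using k0 by (simp add: P_def)
    have mle: "m \<le> g k" if "k \<in> P" for k unfolding m_def using Pf that by simp
    define g' where "g' k = (if 0 < g k then g k - m else 0)" for k
    have g'nn: "\<forall>k\<in>K. 0 \<le> g' k" using mle by (auto simp: g'_def P_def)
    have sub: "{k\<in>K. 0 < g' k} \<subset> P"
    proof
      show "{k\<in>K. 0 < g' k} \<subseteq> P" by (auto simp: g'_def P_def split: if_splits)
      show "{k\<in>K. 0 < g' k} \<noteq> P" using k0 by (auto simp: g'_def)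
    qed
    have card: "card {k\<in>K. 0 < g' k} < card {k\<in>K. 0 < g k}"
      using psubset_card_mono[OF Pf sub] by (simp add: P_def)
    have set_eq: "{k\<in>K. t \<le> g' k} = {k\<in>K. t + m \<le> g k}" if "t > 0" for t
      using that m0 by (auto simp: g'_def split: if_splits)
    have hyp': "\<forall>t>0. (\<Sum>k\<in>{k\<in>K. t \<le> g' k}. q k) \<le> c * (\<Sum>k\<in>{k\<in>K. t \<le> g' k}. s k)"
    proof (intro allI impI)
      fix t :: real assume t: "t > 0"
      show "(\<Sum>k\<in>{k\<in>K. t \<le> g' k}. q k) \<le> c * (\<Sum>k\<in>{k\<in>K. t \<le> g' k}. s k)"
        unfolding set_eq[OF t] using less.prems(2) t m0 by auto
    qed
    have IH: "(\<Sum>k\<in>K. q k * g' k) \<le> c * (\<Sum>k\<in>K. s k * g' k)"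
      by (rule less.hyps[OF card g'nn hyp'])
    have Pm: "P = {k\<in>K. m \<le> g k}" using mle m0 by (auto simp: P_def)
    have top: "(\<Sum>k\<in>P. q k) \<le> c * (\<Sum>k\<in>P. s k)"
      unfolding Pm using less.prems(2) m0 by auto
    have split: "(\<Sum>k\<in>K. f k * g k) = (\<Sum>k\<in>K. f k * g' k) + m * (\<Sum>k\<in>P. f k)" for f :: "nat \<Rightarrow> real"
    proof -
      have "(\<Sum>k\<in>K. f k * g k) = (\<Sum>k\<in>K. f k * g' k + m * (if 0 < g k then f k else 0))"
        using less.prems(1) by (intro sum.cong refl) (force simp: g'_def algebra_simps)
      also have "\<dots> = (\<Sum>k\<in>K. f k * g' k) + m * (\<Sum>k\<in>K. if 0 < g k then f k else 0)"
        by (simp add: sum.distrib sum_distrib_left)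
      also have "(\<Sum>k\<in>K. if 0 < g k then f k else 0) = (\<Sum>k\<in>P. f k)"
        unfolding P_def using K by (simp add: sum.inter_filter)
      finally show ?thesis .
    qed
    have "(\<Sum>k\<in>K. q k * g k) = (\<Sum>k\<in>K. q k * g' k) + m * (\<Sum>k\<in>P. q k)" by (rule split)
    also have "\<dots> \<le> c * (\<Sum>k\<in>K. s k * g' k) + m * (c * (\<Sum>k\<in>P. s k))"
      using IH top m0 by (intro add_mono mult_left_mono) simp_all
    also have "\<dots> = c * (\<Sum>k\<in>K. s k * g k)" unfolding split[of s] by (simp add: algebra_simps)
    finally show ?thesis .
  qed
qed


lemma norm_value_upd:
  assumes k: "k < n"
  shows "norm_value n Nw (L(k := L k + w)) b =
    norm_value n Nw L b + (if b = k then w / real (Nw k) else 0) - w / real (total_slots n Nw)"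
proof -
  have "(\<Sum>i<n. (L(k := L k + w)) i) = (\<Sum>i<n. L i + (if i = k then w else 0))"
    by (intro sum.cong) auto
  also have "\<dots> = (\<Sum>i<n. L i) + w" using k by (simp add: sum.distrib)
  finally have s: "(\<Sum>i<n. (L(k := L k + w)) i) = (\<Sum>i<n. L i) + w" .
  show ?thesis unfolding norm_value_def s by (auto simp: add_divide_distrib)
qed

lemma phi_upd:
  assumes k: "k < n"
  shows "Phi a (slot_vector n Nw (L(k := L k + w))) =
    (\<Sum>b<n. real (Nw b) * exp (a * norm_value n Nw L b) *
        exp (((if b = k then a / real (Nw k) else 0) - a / real (total_slots n Nw)) * w))"
  unfolding phi_slot norm_value_upd[OF k]
  by (intro sum.cong refl) (simp add: mult.assoc algebra_simps flip: exp_add)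

lemma int_bound:
  fixes W :: "real measure" and lam S a :: real
  assumes Wp: "prob_space W" and Ws: "sets W = sets borel" and Wnn: "AE w in W. 0 \<le> w"
    and lam: "lam > 0" and Wi: "integrable W (\<lambda>w. exp (lam * w))"
    and mean: "(\<integral>w. w \<partial>W) = 1"
    and Sd: "\<forall>z. \<bar>z\<bar> < lam / 2 \<longrightarrow> deriv (deriv (mgf W)) z \<le> 2 * S"
    and S: "S \<ge> 0"
    and a: "0 < a" "a \<le> lam / 2"
    and k: "k < n" and Nw: "\<forall>i<n. Nw i > 0"
  shows "(\<integral>w. Phi a (slot_vector n Nw (L(k := L k + w))) \<partial>W) \<le>
     (1 - a / real (total_slots n Nw) + S * a\<^sup>2 / (real (total_slots n Nw))\<^sup>2)
        * Phi a (slot_vector n Nw L) + (a + S * a\<^sup>2) * exp (a * norm_value n Nw L k)"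
proof -
  define N where "N = real (total_slots n Nw)"
  define y where "y b = norm_value n Nw L b" for b
  define z where "z b = (if b = k then a / real (Nw k) else 0) - a / N" for b
  define A where "A = 1 - a / N + S * a\<^sup>2 / N\<^sup>2"
  have Nk: "real (Nw k) \<le> N" "real (Nw k) \<ge> 1"
  proof -
    have "Nw k \<le> (\<Sum>i<n. Nw i)" using k by (intro member_le_sum) auto
    then show "real (Nw k) \<le> N" unfolding N_def total_slots_def by linarith
    show "real (Nw k) \<ge> 1" using Nw k by (simp add: Suc_le_eq)
  qed
  have N1: "N \<ge> 1" using Nk by simp
  define u where "u = a / N"
  define v where "v = a / real (Nw k)"
  have uv: "0 < u" "u \<le> a" "v \<le> a" "u \<le> v"
  proof -
    show "0 < u" using a N1 by (simp add: u_def)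
    show "u \<le> a" using a N1 by (simp add: u_def divide_le_eq)
    show "v \<le> a" using a Nk by (simp add: v_def divide_le_eq)
    show "u \<le> v" unfolding u_def v_def using a Nk by (intro divide_left_mono) auto
  qed
  have zuv: "z b = (if b = k then v else 0) - u" for b by (simp add: z_def u_def v_def)
  have zb: "\<bar>z b\<bar> < lam" "- (lam / 2) \<le> z b" "z b < lam / 2" for b
    using uv a lam unfolding zuv by (cases "b = k"; simp; linarith)+
  have ie: "integrable W (\<lambda>w. exp (z b * w))" for b
    using integW[OF Wp Ws Wnn lam Wi zb(1)[of b], of 0] by simp
  have mb: "mgf W (z b) \<le> 1 + z b + S * (z b)\<^sup>2" for b
    by (rule mgf_le[OF Wp Ws Wnn lam Wi mean Sd zb(2,3)])
  have eq: "(\<integral>w. Phi a (slot_vector n Nw (L(k := L k + w))) \<partial>W) =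
      (\<Sum>b<n. real (Nw b) * exp (a * y b) * mgf W (z b))"
    unfolding phi_upd[OF k] y_def[symmetric] N_def[symmetric] z_def[symmetric]
    using ie by (simp add: mgf_def)
  have tm: "real (Nw b) * exp (a * y b) * mgf W (z b) \<le>
      real (Nw b) * exp (a * y b) * A + (if b = k then (a + S * a\<^sup>2) * exp (a * y k) else 0)" for b
  proof (cases "b = k")
    case False
    have "mgf W (z b) \<le> A"
      using mb[of b] False by (simp add: z_def A_def power_divide)
    then show ?thesis using False by (simp add: mult_left_mono)
  next
    case True
    have z0: "0 \<le> z k" "z k \<le> a / real (Nw k)"
    proof -
      have "a / N \<le> a / real (Nw k)" using a Nk by (intro divide_left_mono) auto
      then show "0 \<le> z k" by (simp add: z_def)
      show "z k \<le> a / real (Nw k)" using a N1 by (simp add: z_def)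
    qed
    have "(z k)\<^sup>2 \<le> (a / real (Nw k))\<^sup>2" using z0 by (intro power_mono) auto
    then have s1: "S * (z k)\<^sup>2 \<le> S * (a / real (Nw k))\<^sup>2" using S by (rule mult_left_mono)
    have s2: "S * a\<^sup>2 / N\<^sup>2 \<ge> 0" using S by simp
    have zk: "z k = a / real (Nw k) - a / N" by (simp add: z_def)
    have "mgf W (z k) \<le> A + a / real (Nw k) + S * (a / real (Nw k))\<^sup>2"
      using mb[of k] s1 s2 unfolding A_def zk by linarith
    then have "real (Nw k) * exp (a * y k) * mgf W (z k) \<le>
        real (Nw k) * exp (a * y k) * (A + a / real (Nw k) + S * (a / real (Nw k))\<^sup>2)"
      by (intro mult_left_mono) auto
    also have "\<dots> = real (Nw k) * exp (a * y k) * A + (a + S * a\<^sup>2 / real (Nw k)) * exp (a * y k)"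
      using Nk by (simp add: field_simps power2_eq_square)
    also have "\<dots> \<le> real (Nw k) * exp (a * y k) * A + (a + S * a\<^sup>2) * exp (a * y k)"
    proof -
      have "S * a\<^sup>2 / real (Nw k) \<le> S * a\<^sup>2"
      proof -
        have "0 \<le> S * a\<^sup>2" using S by simp
        then show ?thesis using Nk by (simp add: divide_le_eq mult_le_cancel_left1)
      qed
      then show ?thesis by (intro add_left_mono mult_right_mono) auto
    qed
    finally show ?thesis using True by simp
  qed
  have "(\<Sum>b<n. real (Nw b) * exp (a * y b) * mgf W (z b)) \<le>
      (\<Sum>b<n. real (Nw b) * exp (a * y b) * A + (if b = k then (a + S * a\<^sup>2) * exp (a * y k) else 0))"
    by (rule sum_mono) (rule tm)
  also have "\<dots> = A * (\<Sum>b<n. real (Nw b) * exp (a * y b)) + (a + S * a\<^sup>2) * exp (a * y k)"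
    using k by (simp add: sum.distrib sum_distrib_left algebra_simps)
  also have "\<dots> = A * Phi a (slot_vector n Nw L) + (a + S * a\<^sup>2) * exp (a * y k)"
    by (simp add: phi_slot y_def)
  finally show ?thesis
    unfolding eq by (simp add: A_def N_def y_def)
qed


lemma m_bounds:
  assumes N: "N \<ge> (1::nat)"
  shows "nat \<lceil>3 * real N / 4\<rceil> - 1 < N" "real (nat \<lceil>3 * real N / 4\<rceil> - 1) \<le> 3 * real N / 4"
proof -
  have c1: "\<lceil>3 * real N / 4\<rceil> \<le> int N" by (rule ceiling_le) simp
  have "0 < \<lceil>3 * real N / 4\<rceil>" using N by (simp add: zero_less_ceiling)
  then have c2: "\<lceil>3 * real N / 4\<rceil> \<ge> 1" by linarith
  have c3: "real_of_int \<lceil>3 * real N / 4\<rceil> - 1 < 3 * real N / 4" using ceiling_correct by blast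
  show "nat \<lceil>3 * real N / 4\<rceil> - 1 < N" using c1 c2 by linarith
  have "real (nat \<lceil>3 * real N / 4\<rceil> - 1) = real_of_int \<lceil>3 * real N / 4\<rceil> - 1"
  proof -
    have "1 \<le> nat \<lceil>3 * real N / 4\<rceil>" using c2 by linarith
    then have "real (nat \<lceil>3 * real N / 4\<rceil> - 1) = real (nat \<lceil>3 * real N / 4\<rceil>) - 1"
      by (simp add: of_nat_diff)
    also have "real (nat \<lceil>3 * real N / 4\<rceil>) = real_of_int \<lceil>3 * real N / 4\<rceil>"
      using c2 by simp
    finally show ?thesis .
  qed
  then show "real (nat \<lceil>3 * real N / 4\<rceil> - 1) \<le> 3 * real N / 4" using c3 by simp
qed

lemma pos_slots:
  assumes N: "total_slots n Nw \<ge> 1"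
    and slot: "slot_vector n Nw L ! (nat \<lceil>3 * real (total_slots n Nw) / 4\<rceil> - 1) \<le> 0"
  shows "real (\<Sum>k<n. if 0 < norm_value n Nw L k then Nw k else 0) \<le> 3 * real (total_slots n Nw) / 4"
proof -
  define m where "m = nat \<lceil>3 * real (total_slots n Nw) / 4\<rceil> - 1"
  define l where "l = concat (map (\<lambda>i. replicate (Nw i) (norm_value n Nw L i)) [0..<n])"
  have sv: "slot_vector n Nw L = rev (sort l)" by (simp add: slot_vector_def l_def)
  have "m < length (rev (sort l))"
    using m_bounds(1)[OF N] length_slot_vector[of n Nw L] by (simp add: m_def sv)
  from sorted_desc_count[OF this] slot have "length (filter (\<lambda>x. 0 < x) l) \<le> m"
    by (simp add: sv m_def)
  then have "(\<Sum>k<n. if 0 < norm_value n Nw L k then Nw k else 0) \<le> m"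
    by (simp add: l_def count_concat_rep)
  then have "real (\<Sum>k<n. if 0 < norm_value n Nw L k then Nw k else 0) \<le> real m" by linarith
  also have "\<dots> \<le> 3 * real (total_slots n Nw) / 4" using m_bounds(2)[OF N] by (simp add: m_def)
  finally show ?thesis .
qed

lemma chosen_props:
  assumes tb: "\<forall>i j. tb i j = i \<or> tb i j = j"
  shows "chosen_bin Nw tb L i j = i \<or> chosen_bin Nw tb L i j = j"
    "L (chosen_bin Nw tb L i j) / real (Nw (chosen_bin Nw tb L i j)) \<le> L i / real (Nw i)"
    "L (chosen_bin Nw tb L i j) / real (Nw (chosen_bin Nw tb L i j)) \<le> L j / real (Nw j)"
  using tb[rule_format, of i j] unfolding chosen_bin_def by auto

lemma restr:
  fixes f :: "nat \<Rightarrow> real"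
  assumes "U \<subseteq> {..<n}"
  shows "(\<Sum>k<n. if k \<in> U then f k else 0) = sum f U"
proof -
  have "(\<Sum>k<n. if k \<in> U then f k else 0) = sum f ({..<n} \<inter> U)"
    by (simp add: sum.inter_restrict)
  also have "{..<n} \<inter> U = U" using assms by auto
  finally show ?thesis .
qed

lemma step:
  fixes S \<mu> :: real and W :: "real measure"
  assumes S: "S \<ge> 1" and \<mu>: "\<mu> > 0"
    and n: "n \<ge> 1" and Nw: "\<forall>i<n. Nw i > 0" and \<beta>: "\<beta> \<ge> 1" "\<beta>\<^sup>2 \<le> 4/3 - \<mu>"
    and D: "set_pmf D \<subseteq> {..<n}"
    and Db: "\<forall>i<n. pmf D i \<le> \<beta> * real (Nw i) / real (total_slots n Nw)"
    and Wp: "prob_space W" and Ws: "sets W = sets borel" and Wnn: "AE w in W. 0 \<le> w"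
    and mean: "(\<integral>w. w \<partial>W) = 1"
    and lam: "lam > 0" and Wi: "integrable W (\<lambda>w. exp (lam * w))"
    and Sd: "\<forall>z. \<bar>z\<bar> < lam / 2 \<longrightarrow> deriv (deriv (mgf W)) z \<le> 2 * S"
    and a: "0 < a" "a \<le> \<mu> / (8 * S)" "a \<le> lam / 2"
    and tb: "\<forall>i j. tb i j = i \<or> tb i j = j"
    and slot: "slot_vector n Nw L ! (nat \<lceil>3 * real (total_slots n Nw) / 4\<rceil> - 1) \<le> 0"
  shows "measure_pmf.expectation D (\<lambda>i. measure_pmf.expectation D (\<lambda>j.
        \<integral>w. Phi a (slot_vector n Nw (next_load Nw tb L i j w)) \<partial>W))
     \<le> (1 - \<mu> * a / (2 * real (total_slots n Nw))) * Phi a (slot_vector n Nw L) + 1"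
proof -
  define N where "N = real (total_slots n Nw)"
  define y where "y k = norm_value n Nw L k" for k
  define p where "p i = pmf D i" for i
  define c where "c i j = chosen_bin Nw tb L i j" for i j
  define \<Phi> where "\<Phi> = Phi a (slot_vector n Nw L)"
  define A where "A = 1 - a / N + S * a\<^sup>2 / N\<^sup>2"
  define B where "B = a + S * a\<^sup>2"
  define e where "e k = exp (a * y k)" for k
  define I where "I i j = (\<integral>w. Phi a (slot_vector n Nw (next_load Nw tb L i j w)) \<partial>W)" for i j
  have Nnat: "total_slots n Nw \<ge> 1"
  proof -
    have "Nw 0 \<le> (\<Sum>i<n. Nw i)" using n by (intro member_le_sum) auto
    moreover have "Nw 0 > 0" using Nw n by auto
    ultimately show ?thesis by (simp add: total_slots_def)
  qed
  then have N1: "N \<ge> 1" by (simp add: N_def)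
  have \<Phi>_eq: "\<Phi> = (\<Sum>k<n. real (Nw k) * e k)" by (simp add: \<Phi>_def phi_slot e_def y_def)
  have \<Phi>0: "\<Phi> \<ge> 0" unfolding \<Phi>_eq by (intro sum_nonneg) (simp add: e_def)
  have p0: "p i \<ge> 0" for i by (simp add: p_def)
  have psum: "(\<Sum>i<n. p i) = 1" unfolding p_def by (rule sum_pmf_eq_1) (use D in auto)
  have clt: "c i j < n" if "i < n" "j < n" for i j
    using chosen_props(1)[OF tb, of Nw L i j] that by (auto simp: c_def)
  have cle: "y (c i j) \<le> y i" "y (c i j) \<le> y j" for i j
    using chosen_props(2,3)[OF tb, of L Nw i j] by (simp_all add: y_def c_def norm_value_def)
  have \<mu>3: "\<mu> \<le> 1/3"
  proof -
    have "1 \<le> \<beta>\<^sup>2" using \<beta>(1) by (simp add: one_le_power)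
    then show ?thesis using \<beta>(2) by simp
  qed
  have LHS: "measure_pmf.expectation D (\<lambda>i. measure_pmf.expectation D (\<lambda>j. I i j)) =
      (\<Sum>i<n. p i * (\<Sum>j<n. p j * I i j))"
  proof -
    have inner: "measure_pmf.expectation D (\<lambda>j. I i j) = (\<Sum>j<n. p j * I i j)" for i
      by (subst integral_measure_pmf[of "{..<n}"]) (use D in \<open>auto simp: p_def\<close>)
    show ?thesis
      by (subst integral_measure_pmf[of "{..<n}"]) (use D in \<open>auto simp: p_def inner\<close>)
  qed
  have Ib: "I i j \<le> A * \<Phi> + B * e (c i j)" if "i < n" "j < n" for i j
  proof -
    have nl: "next_load Nw tb L i j w = L(c i j := L (c i j) + w)" for w
      by (simp add: next_load_def c_def Let_def)
    show ?thesis
      unfolding I_def nl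
      using int_bound[OF Wp Ws Wnn lam Wi mean Sd _ a(1) a(3) clt[OF that] Nw, of L] S
      by (simp add: A_def B_def N_def \<Phi>_def e_def y_def)
  qed
  define G where "G = (\<Sum>i<n. \<Sum>j<n. p i * p j * e (c i j))"
  have step2: "(\<Sum>i<n. p i * (\<Sum>j<n. p j * I i j)) \<le> A * \<Phi> + B * G"
  proof -
    have "(\<Sum>i<n. p i * (\<Sum>j<n. p j * I i j)) \<le> (\<Sum>i<n. p i * (\<Sum>j<n. p j * (A * \<Phi> + B * e (c i j))))"
      using Ib p0 by (intro sum_mono mult_left_mono) auto
    also have "\<dots> = (\<Sum>i<n. p i) * (\<Sum>j<n. p j) * (A * \<Phi>) + B * G"
      by (simp add: G_def algebra_simps sum.distrib sum_distrib_left sum_distrib_right)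
    finally show ?thesis using psum by simp
  qed
  define g where "g k = (if 0 < y k then e k else 0)" for k
  define q where "q k = (\<Sum>i<n. \<Sum>j<n. if c i j = k then p i * p j else 0)" for k
  have swap: "(\<Sum>i<n. \<Sum>j<n. p i * p j * h (c i j)) = (\<Sum>k<n. q k * h k)" for h :: "nat \<Rightarrow> real"
  proof -
    have "(\<Sum>i<n. \<Sum>j<n. p i * p j * h (c i j)) =
        (\<Sum>i<n. \<Sum>j<n. \<Sum>k<n. if c i j = k then p i * p j * h k else 0)"
      using clt by (intro sum.cong refl) (simp add: sum.delta)
    also have "\<dots> = (\<Sum>i<n. \<Sum>k<n. \<Sum>j<n. if c i j = k then p i * p j * h k else 0)"
      by (rule sum.cong[OF refl]) (rule sum.swap)
    also have "\<dots> = (\<Sum>k<n. \<Sum>i<n. \<Sum>j<n. if c i j = k then p i * p j * h k else 0)"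
      by (rule sum.swap)
    also have "\<dots> = (\<Sum>k<n. q k * h k)"
      unfolding q_def sum_distrib_right by (intro sum.cong refl) simp
    finally show ?thesis .
  qed
  define c0 where "c0 = (1 - 3 * \<mu> / 4) / N"
  have c0: "c0 \<ge> 0" using \<mu>3 N1 by (simp add: c0_def)
  have hyp: "\<forall>t>0. (\<Sum>k\<in>{k\<in>{..<n}. t \<le> g k}. q k) \<le> c0 * (\<Sum>k\<in>{k\<in>{..<n}. t \<le> g k}. real (Nw k))"
  proof (intro allI impI)
    fix t :: real assume t: "t > 0"
    define U where "U = {k\<in>{..<n}. t \<le> g k}"
    have Upos: "0 < y k" if "k \<in> U" for k
    proof (rule ccontr)
      assume "\<not> 0 < y k"
      then have "g k = 0" by (simp add: g_def)
      then show False using that t by (simp add: U_def)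
    qed
    have Umem: "k \<in> U \<longleftrightarrow> k < n \<and> 0 < y k \<and> t \<le> e k" for k
      using t by (auto simp: U_def g_def)
    have closed: "i \<in> U" if "c i j \<in> U" "i < n" for i j
    proof -
      have "0 < y (c i j)" by (rule Upos[OF that(1)])
      moreover have "t \<le> e (c i j)" using that(1) Upos[OF that(1)] by (simp add: U_def g_def)
      moreover have "e (c i j) \<le> e i" using cle(1)[of i j] a(1) by (simp add: e_def)
      ultimately show ?thesis using cle(1)[of i j] that(2) unfolding Umem by linarith
    qed
    have closed2: "j \<in> U" if "c i j \<in> U" "j < n" for i j
    proof -
      have "0 < y (c i j)" by (rule Upos[OF that(1)])
      moreover have "t \<le> e (c i j)" using that(1) Upos[OF that(1)] by (simp add: U_def g_def)
      moreover have "e (c i j) \<le> e j" using cle(2)[of i j] a(1) by (simp add: e_def)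
      ultimately show ?thesis using cle(2)[of i j] that(2) unfolding Umem by linarith
    qed
    have Usub: "U \<subseteq> {..<n}" by (auto simp: U_def)
    have "(\<Sum>k\<in>U. q k) = (\<Sum>k<n. if k \<in> U then q k else 0)" by (rule restr[OF Usub, symmetric])
    also have "\<dots> = (\<Sum>k<n. q k * (if k \<in> U then 1 else 0))" by (intro sum.cong) auto
    also have "\<dots> = (\<Sum>i<n. \<Sum>j<n. p i * p j * (if c i j \<in> U then 1 else 0))"
      by (rule swap[symmetric])
    also have "\<dots> \<le> (\<Sum>i<n. \<Sum>j<n. (if i \<in> U then p i else 0) * (if j \<in> U then p j else 0))"
    proof (intro sum_mono)
      fix i j assume ij: "i \<in> {..<n}" "j \<in> {..<n}"
      show "p i * p j * (if c i j \<in> U then 1 else 0) \<le> (if i \<in> U then p i else 0) * (if j \<in> U then p j else 0)"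
      proof (cases "c i j \<in> U")
        case True
        then have "i \<in> U" "j \<in> U" using closed[OF True] closed2[OF True] ij by simp_all
        then show ?thesis using True by simp
      next
        case False
        have "0 \<le> (if i \<in> U then p i else 0) * (if j \<in> U then p j else 0)"
          using p0 by (intro mult_nonneg_nonneg) auto
        then show ?thesis using False by simp
      qed
    qed
    also have "\<dots> = (\<Sum>i<n. if i \<in> U then p i else 0) * (\<Sum>j<n. if j \<in> U then p j else 0)"
      by (rule sum_product[symmetric])
    also have "\<dots> = (\<Sum>i\<in>U. p i)\<^sup>2" by (simp add: restr[OF Usub] power2_eq_square)
    finally have qU: "(\<Sum>k\<in>U. q k) \<le> (\<Sum>i\<in>U. p i)\<^sup>2" .
    define sU where "sU = (\<Sum>k\<in>U. real (Nw k))"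
    have sU0: "sU \<ge> 0" by (simp add: sU_def sum_nonneg)
    have pU: "(\<Sum>i\<in>U. p i) \<le> \<beta> * sU / N"
    proof -
      have "(\<Sum>i\<in>U. p i) \<le> (\<Sum>i\<in>U. \<beta> * real (Nw i) / N)"
        using Db Usub by (intro sum_mono) (auto simp: p_def N_def)
      also have "\<dots> = \<beta> * sU / N" unfolding sU_def by (simp add: sum_divide_distrib sum_distrib_left)
      finally show ?thesis .
    qed
    have sUle: "sU \<le> 3 * N / 4"
    proof -
      have "sU = (\<Sum>k<n. if k \<in> U then real (Nw k) else 0)"
        unfolding sU_def by (rule restr[OF Usub, symmetric])
      also have "\<dots> \<le> (\<Sum>k<n. if 0 < y k then real (Nw k) else 0)"
        using Upos by (intro sum_mono) auto
      also have "\<dots> = real (\<Sum>k<n. if 0 < norm_value n Nw L k then Nw k else 0)"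
        unfolding of_nat_sum by (intro sum.cong refl) (simp add: y_def)
      also have "\<dots> \<le> 3 * N / 4" using pos_slots[OF Nnat slot] by (simp add: N_def)
      finally show ?thesis .
    qed
    have pU0: "0 \<le> (\<Sum>i\<in>U. p i)" by (intro sum_nonneg) (simp add: p0)
    have "(\<Sum>i\<in>U. p i)\<^sup>2 \<le> (\<beta> * sU / N)\<^sup>2"
      by (rule power_mono[OF pU pU0])
    also have "\<dots> = \<beta>\<^sup>2 * sU * sU / N\<^sup>2" by (simp add: power2_eq_square)
    also have "\<dots> \<le> (4/3 - \<mu>) * sU * (3 * N / 4) / N\<^sup>2"
    proof -
      have h1: "\<beta>\<^sup>2 * sU \<le> (4/3 - \<mu>) * sU" using \<beta>(2) sU0 by (rule mult_right_mono)
      have h2: "0 \<le> (4/3 - \<mu>) * sU" using \<mu>3 sU0 by simp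
      have "\<beta>\<^sup>2 * sU * sU \<le> (4/3 - \<mu>) * sU * sU" using h1 sU0 by (rule mult_right_mono)
      also have "\<dots> \<le> (4/3 - \<mu>) * sU * (3 * N / 4)" using sUle h2 by (rule mult_left_mono)
      finally show ?thesis by (rule divide_right_mono) simp
    qed
    also have "\<dots> = c0 * sU" using N1 by (simp add: c0_def power2_eq_square field_simps)
    finally have "(\<Sum>i\<in>U. p i)\<^sup>2 \<le> c0 * sU" .
    then show "(\<Sum>k\<in>{k\<in>{..<n}. t \<le> g k}. q k) \<le> c0 * (\<Sum>k\<in>{k\<in>{..<n}. t \<le> g k}. real (Nw k))"
      unfolding U_def[symmetric] sU_def[symmetric] using qU by linarith
  qed
  have g0: "\<forall>k\<in>{..<n}. 0 \<le> g k" by (simp add: g_def e_def)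
  have Gg: "(\<Sum>k<n. q k * g k) \<le> c0 * \<Phi>"
  proof -
    have "(\<Sum>k\<in>{..<n}. q k * g k) \<le> c0 * (\<Sum>k\<in>{..<n}. real (Nw k) * g k)"
      by (rule abel[OF _ c0 g0 hyp]) simp
    also have "\<dots> \<le> c0 * \<Phi>"
      unfolding \<Phi>_eq using c0 by (intro mult_left_mono sum_mono) (auto simp: g_def e_def)
    finally show ?thesis by simp
  qed
  have G: "G \<le> c0 * \<Phi> + 1"
  proof -
    have "G \<le> (\<Sum>i<n. \<Sum>j<n. p i * p j * (g (c i j) + 1))"
    proof -
      have ek: "e k \<le> g k + 1" for k
      proof (cases "0 < y k")
        case False
        then have "a * y k \<le> 0" using a(1) by (simp add: mult_nonneg_nonpos)
        then show ?thesis using False by (simp add: g_def e_def)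
      qed (simp add: g_def)
      show ?thesis
        unfolding G_def using p0 ek by (intro sum_mono mult_left_mono) (auto simp: mult_nonneg_nonneg)
    qed
    also have "\<dots> = (\<Sum>i<n. \<Sum>j<n. p i * p j * g (c i j)) + (\<Sum>i<n. \<Sum>j<n. p i * p j)"
      by (simp add: distrib_left sum.distrib)
    also have "\<dots> = (\<Sum>k<n. q k * g k) + 1"
    proof -
      have pp: "(\<Sum>i<n. \<Sum>j<n. p i * p j) = 1" using psum by (simp add: sum_product[symmetric])
      have sw: "(\<Sum>i<n. \<Sum>j<n. p i * p j * g (c i j)) = (\<Sum>k<n. q k * g k)" by (rule swap)
      show ?thesis using pp sw by simp
    qed
    finally show ?thesis using Gg by simp
  qed
  have B0: "B \<ge> 0" using a S by (simp add: B_def)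
  have Sa: "S * a \<le> \<mu> / 8"
  proof -
    have "a * (8 * S) \<le> \<mu>" using a(2) S by (simp add: le_divide_eq)
    then show ?thesis by (simp add: algebra_simps)
  qed
  have a1: "a \<le> 1/24"
  proof -
    have "\<mu> / (8 * S) \<le> \<mu> / 8" using S \<mu> by (intro divide_left_mono) auto
    then show ?thesis using a(2) \<mu>3 by linarith
  qed
  have B1: "B \<le> 1"
  proof -
    have "S * a\<^sup>2 = (S * a) * a" by (simp add: power2_eq_square)
    also have "\<dots> \<le> (\<mu> / 8) * 1" using Sa a a1 \<mu> by (intro mult_mono) auto
    finally show ?thesis using a1 \<mu>3 by (simp add: B_def)
  qed
  have coef: "A + B * c0 \<le> 1 - \<mu> * a / (2 * N)"
  proof -
    have t1: "S * a\<^sup>2 / N\<^sup>2 \<le> S * a\<^sup>2 / N"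
      using N1 S by (intro divide_left_mono) (auto simp: power2_eq_square)
    have t2: "B * (1 - 3 * \<mu> / 4) \<le> a + S * a\<^sup>2 - 3 * \<mu> * a / 4"
    proof -
      have "0 \<le> S * a\<^sup>2 * (3 * \<mu> / 4)" using S \<mu> by simp
      then show ?thesis by (simp add: B_def algebra_simps)
    qed
    have t3: "2 * (S * a\<^sup>2) \<le> \<mu> * a / 4"
    proof -
      have "S * a\<^sup>2 = (S * a) * a" by (simp add: power2_eq_square)
      also have "\<dots> \<le> (\<mu> / 8) * a" using Sa a by (intro mult_right_mono) auto
      finally show ?thesis by simp
    qed
    have "A + B * c0 = 1 + (- a + S * a\<^sup>2 / N + B * (1 - 3 * \<mu> / 4)) / N"
      using N1 by (simp add: A_def c0_def field_simps power2_eq_square)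
    also have "\<dots> \<le> 1 + (- a + S * a\<^sup>2 + (a + S * a\<^sup>2 - 3 * \<mu> * a / 4)) / N"
    proof -
      have "S * a\<^sup>2 / N \<le> S * a\<^sup>2 / 1"
        using N1 S by (intro divide_left_mono) auto
      then show ?thesis using t2 N1 by (intro add_left_mono divide_right_mono) auto
    qed
    also have "\<dots> \<le> 1 - \<mu> * a / (2 * N)"
    proof -
      have "(- a + S * a\<^sup>2 + (a + S * a\<^sup>2 - 3 * \<mu> * a / 4)) \<le> - (\<mu> * a / 2)" using t3 by linarith
      then have "(- a + S * a\<^sup>2 + (a + S * a\<^sup>2 - 3 * \<mu> * a / 4)) / N \<le> - (\<mu> * a / 2) / N"
        using N1 by (intro divide_right_mono) auto
      then show ?thesis by simp
    qed
    finally show ?thesis .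
  qed
  have "measure_pmf.expectation D (\<lambda>i. measure_pmf.expectation D (\<lambda>j. I i j))
      \<le> A * \<Phi> + B * G" using LHS step2 by simp
  also have "\<dots> \<le> A * \<Phi> + B * (c0 * \<Phi> + 1)" using G B0 by (intro add_left_mono mult_left_mono) auto
  also have "\<dots> = (A + B * c0) * \<Phi> + B" by (simp add: algebra_simps)
  also have "\<dots> \<le> (1 - \<mu> * a / (2 * N)) * \<Phi> + 1"
    using coef \<Phi>0 B1 by (intro add_mono mult_right_mono) auto
  finally show ?thesis by (simp add: I_def N_def \<Phi>_def)
qed


theorem mainTheorem11:
  fixes S \<mu> :: real
  assumes "S \<ge> 1" and "\<mu> > 0"
  shows "\<exists>a0 > 0. \<forall>(n::nat) (Nw::nat \<Rightarrow> nat) (D::nat pmf) (\<alpha>::real) (\<beta>::real)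
            (W::real measure) (lam::real) (a::real) (L::nat \<Rightarrow> real) (tb::nat \<Rightarrow> nat \<Rightarrow> nat).
     n \<ge> 1 \<longrightarrow> (\<forall>i<n. Nw i > 0) \<longrightarrow>
     \<alpha> \<ge> 1 \<longrightarrow> \<beta> \<ge> 1 \<longrightarrow> \<beta>\<^sup>2 \<le> 4/3 - \<mu> \<longrightarrow>
     set_pmf D \<subseteq> {..<n} \<longrightarrow>
     (\<forall>i<n. real (Nw i) / (\<alpha> * real (total_slots n Nw)) \<le> pmf D i
            \<and> pmf D i \<le> \<beta> * real (Nw i) / real (total_slots n Nw)) \<longrightarrow>
     prob_space W \<longrightarrow> sets W = sets borel \<longrightarrow> (AE w in W. 0 \<le> w) \<longrightarrow>
     integrable W (\<lambda>w. w) \<longrightarrow> (\<integral>w. w \<partial>W) = 1 \<longrightarrow>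
     lam > 0 \<longrightarrow> integrable W (\<lambda>w. exp (lam * w)) \<longrightarrow>
     (\<forall>z. \<bar>z\<bar> < lam / 2 \<longrightarrow> deriv (deriv (mgf W)) z \<le> 2 * S) \<longrightarrow>
     0 < a \<longrightarrow> a \<le> min a0 (lam / 2) \<longrightarrow>
     (\<forall>i<n. 0 \<le> L i) \<longrightarrow>
     (\<forall>i j. tb i j = i \<or> tb i j = j) \<longrightarrow>
     slot_vector n Nw L ! (nat \<lceil>3 * real (total_slots n Nw) / 4\<rceil> - 1) \<le> 0 \<longrightarrow>
     measure_pmf.expectation D (\<lambda>i. measure_pmf.expectation D (\<lambda>j.
        \<integral>w. Phi a (slot_vector n Nw (next_load Nw tb L i j w)) \<partial>W))
     \<le> (1 - \<mu> * a / (2 * real (total_slots n Nw))) * Phi a (slot_vector n Nw L) + 1"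
proof -
  show ?thesis
    apply (rule exI[of _ "\<mu> / (8 * S)"])
    apply (intro conjI allI impI)
    subgoal using assms by simp
    subgoal premises prems for n Nw D \<alpha> \<beta> W lam a L tb
    proof (rule step[OF assms(1,2) prems(1,2,4,5,6) _ prems(8,9,10,12,13,14,15,16) _ _ prems(19,20)])
      show "\<forall>i<n. pmf D i \<le> \<beta> * real (Nw i) / real (total_slots n Nw)" using prems(7) by blast
      show "a \<le> \<mu> / (8 * S)" using prems(17) by simp
      show "a \<le> lam / 2" using prems(17) by simp
    qed
    done
qed

end
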